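(* Let $p\in\mathbf{R}_+^n$, $K=(K_1,\dots,K_n)\in\mathbf{R}_{++}^n$, $w\in\mathbf{R}_{++}^n$ and $K_0>0$. Consider \[ p^{\inf}=\inf\Big\{\mathbf{E}_{\pi}(w^{T}x-K_0)_+ \;:\; \pi \mbox{ a probability measure on }\mathbf{R}_+^n,\ \mathbf{E}_{\pi}(x_i-K_i)_+=p_i,\ i=1,\dots,n\Big\}. \] Then \[ p^{\inf}=\inf_{\nu}\Big\{\sum_{i=1}^n\big(p_iw_i-\nu_i(K_0-w_iK_i)_+\big)_+ \;:\; \nu\in\mathbf{R}^n,\ \nu\ge 0,\ \textstyle\sum_i\nu_i=1\Big\}, \] and this value equals \[ \sum_{\{i:\,K_iw_i\ge K_0\}}p_iw_i+\max_{\{j:\,K_jw_j<K_0\}}\Big(\sum_{\{i:\,K_iw_i<K_0\}}p_iw_i\min\Big(1,\frac{K_0-K_jw_j}{K_0-K_iw_i}\Big)-K_0+w_jK_j\Big)_+ , \] where the maximum over an empty index set is taken to be $0$. Moreover, the infimum $p^{\inf}$ is attained or approached by a sequence of discrete probability measures satisfying the constraints.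
   Context: $(y)_+=\max(y,0)$. $\mathbf{R}_{++}^n$ denotes vectors with strictly positive components. *)

theory Defs
  imports "HOL-Probability.Probability"
begin

definition posp :: "real \<Rightarrow> real" where
  "posp y = max y 0"

definition call_feasible :: "real^'n \<Rightarrow> real^'n \<Rightarrow> (real^'n) measure \<Rightarrow> bool" where
  "call_feasible p K M \<longleftrightarrow>
     prob_space M \<and> sets M = sets borel \<and> (AE x in M. \<forall>i. 0 \<le> x$i) \<and>
     (\<forall>i. (\<integral>\<^sup>+ x. ennreal (posp (x$i - K$i)) \<partial>M) = ennreal (p$i))"

definition basket_obj :: "real^'n \<Rightarrow> real \<Rightarrow> (real^'n) measure \<Rightarrow> ennreal" where
  "basket_obj w K0 M = (\<integral>\<^sup>+ x. ennreal (posp ((\<Sum>i\<in>UNIV. w$i * x$i) - K0)) \<partial>M)"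

definition p_inf :: "real^'n \<Rightarrow> real^'n \<Rightarrow> real^'n \<Rightarrow> real \<Rightarrow> ennreal" where
  "p_inf p K w K0 = (INF M\<in>{M. call_feasible p K M}. basket_obj w K0 M)"

definition dual_value :: "real^'n \<Rightarrow> real^'n \<Rightarrow> real^'n \<Rightarrow> real \<Rightarrow> real" where
  "dual_value p K w K0 =
     (INF \<nu>\<in>{\<nu>::real^'n. (\<forall>i. 0 \<le> \<nu>$i) \<and> (\<Sum>i\<in>UNIV. \<nu>$i) = 1}.
        (\<Sum>i\<in>UNIV. posp (p$i * w$i - \<nu>$i * posp (K0 - w$i * K$i))))"

definition discrete_borel :: "(real^'n) pmf \<Rightarrow> (real^'n) measure" where
  "discrete_borel P = distr (measure_pmf P) borel (\<lambda>x. x)"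

definition closed_form :: "real^'n \<Rightarrow> real^'n \<Rightarrow> real^'n \<Rightarrow> real \<Rightarrow> real" where
  "closed_form p K w K0 =
     (\<Sum>i\<in>{i. K$i * w$i \<ge> K0}. p$i * w$i) +
     (let J = {j. K$j * w$j < K0} in
      if J = {} then 0 else
      Max ((\<lambda>j. posp ((\<Sum>i\<in>J. p$i * w$i * min 1 ((K0 - K$j * w$j) / (K0 - K$i * w$i)))
                       - K0 + w$j * K$j)) ` J))"

end

theory Submission
  imports Defs
begin



lemma posp_nonneg: "0 \<le> posp y" by (simp add: posp_def)

lemma conv1:
  assumes "0 \<le> y" "y \<le> K0" "0 \<le> b" "0 < K0"
  shows "posp (y - b) \<le> y / K0 * posp (K0 - b)"
proof (cases "y \<le> b")
  case True
  thus ?thesis using assms by (simp add: posp_def)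
next
  case False
  have "b * y \<le> b * K0" using assms by (intro mult_left_mono) auto
  hence "y * b / K0 \<le> b" using assms by (simp add: divide_le_eq mult.commute)
  hence "y - b \<le> y / K0 * (K0 - b)" using assms by (simp add: field_simps)
  thus ?thesis using False assms by (simp add: posp_def)
qed

lemma pw1:
  assumes fin: "finite S" and y: "\<forall>i\<in>S. 0 \<le> y i" and b: "\<forall>i\<in>S. 0 \<le> b i"
    and lam: "\<forall>i\<in>S. 0 \<le> lam i" and c: "\<forall>i\<in>S. lam i * posp (K0 - b i) \<le> c"
    and K0: "0 < K0" and c0: "0 \<le> c" and s: "(\<Sum>i\<in>S. y i) \<le> K0"
  shows "(\<Sum>i\<in>S. lam i * posp (y i - b i)) \<le> c"
proof -
  have yle: "y i \<le> K0" if "i \<in> S" for i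
  proof -
    have "y i \<le> (\<Sum>i\<in>S. y i)" using fin y that by (intro member_le_sum) auto
    thus ?thesis using s by simp
  qed
  have "(\<Sum>i\<in>S. lam i * posp (y i - b i)) \<le> (\<Sum>i\<in>S. y i / K0 * (lam i * posp (K0 - b i)))"
  proof (intro sum_mono)
    fix i assume i: "i \<in> S"
    have "posp (y i - b i) \<le> y i / K0 * posp (K0 - b i)"
      using conv1[of "y i" K0 "b i"] y b yle i K0 by auto
    hence "lam i * posp (y i - b i) \<le> lam i * (y i / K0 * posp (K0 - b i))"
      using lam i by (intro mult_left_mono) auto
    thus "lam i * posp (y i - b i) \<le> y i / K0 * (lam i * posp (K0 - b i))" by (simp add: mult_ac)
  qed
  also have "\<dots> \<le> (\<Sum>i\<in>S. y i / K0 * c)"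
    using y c K0 by (intro sum_mono mult_left_mono) auto
  also have "\<dots> = (\<Sum>i\<in>S. y i) / K0 * c" by (simp add: sum_distrib_right sum_divide_distrib)
  also have "\<dots> \<le> c"
  proof -
    have "0 \<le> (\<Sum>i\<in>S. y i)" using y by (intro sum_nonneg) auto
    hence "(\<Sum>i\<in>S. y i) / K0 \<le> 1" "0 \<le> (\<Sum>i\<in>S. y i) / K0" using s K0 by auto
    thus ?thesis using c0 by (intro mult_left_le_one_le) auto
  qed
  finally show ?thesis .
qed

lemma posp_shift: "d \<ge> 0 \<Longrightarrow> posp (x + d) \<le> posp x + d"
  by (simp add: posp_def)

lemma pw2:
  assumes fin: "finite S" and y: "\<forall>i\<in>S. 0 \<le> y i" and b: "\<forall>i\<in>S. 0 \<le> b i"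
    and lam: "\<forall>i\<in>S. 0 \<le> lam i \<and> lam i \<le> 1" and c: "\<forall>i\<in>S. lam i * posp (K0 - b i) \<le> c"
    and K0: "0 < K0" and c0: "0 \<le> c"
  shows "(\<Sum>i\<in>S. lam i * posp (y i - b i)) \<le> posp ((\<Sum>i\<in>S. y i) - K0) + c"
proof (cases "(\<Sum>i\<in>S. y i) \<le> K0")
  case True
  have "(\<Sum>i\<in>S. lam i * posp (y i - b i)) \<le> c"
    using pw1[OF fin y b _ c K0 c0 True] lam by auto
  thus ?thesis using posp_nonneg[of "(\<Sum>i\<in>S. y i) - K0"] by linarith
next
  case False
  define s where "s = (\<Sum>i\<in>S. y i)"
  have sK: "K0 < s" using False s_def by simp
  define t where "t = K0 / s"
  have t0: "0 < t" "t \<le> 1" using sK K0 by (auto simp: t_def)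
  define y' where "y' i = t * y i" for i
  have y': "\<forall>i\<in>S. 0 \<le> y' i" using y t0 by (auto simp: y'_def)
  have sy': "(\<Sum>i\<in>S. y' i) = K0" 
  proof -
    have "(\<Sum>i\<in>S. y' i) = t * s" by (simp add: y'_def s_def sum_distrib_left)
    thus ?thesis using sK K0 by (simp add: t_def)
  qed
  have A: "(\<Sum>i\<in>S. lam i * posp (y' i - b i)) \<le> c"
    using pw1[OF fin y' b _ c K0 c0] sy' lam by auto
  have "(\<Sum>i\<in>S. lam i * posp (y i - b i)) \<le> (\<Sum>i\<in>S. lam i * posp (y' i - b i) + (y i - y' i))"
  proof (intro sum_mono)
    fix i assume i: "i \<in> S"
    have d: "0 \<le> y i - y' i" using y i t0 by (auto simp: y'_def mult_left_le_one_le)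
    have "posp (y i - b i) \<le> posp (y' i - b i) + (y i - y' i)"
      using posp_shift[OF d, of "y' i - b i"] by simp
    hence "lam i * posp (y i - b i) \<le> lam i * posp (y' i - b i) + lam i * (y i - y' i)"
      using lam i by (simp add: mult_left_mono distrib_left[symmetric])
    also have "\<dots> \<le> lam i * posp (y' i - b i) + (y i - y' i)"
      using lam i d by (simp add: mult_left_le_one_le)
    finally show "lam i * posp (y i - b i) \<le> lam i * posp (y' i - b i) + (y i - y' i)" .
  qed
  also have "\<dots> = (\<Sum>i\<in>S. lam i * posp (y' i - b i)) + (s - K0)"
    by (simp add: sum.distrib sum_subtractf s_def sy')
  also have "\<dots> \<le> c + (s - K0)" using A by simp
  also have "\<dots> = posp (s - K0) + c" using sK by (simp add: posp_def)
  finally show ?thesis unfolding s_def .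
qed



definition hfun :: "'a set \<Rightarrow> ('a \<Rightarrow> real) \<Rightarrow> ('a \<Rightarrow> real) \<Rightarrow> real \<Rightarrow> real" where
  "hfun J q a x = (\<Sum>i\<in>J. q i * min 1 (x / a i)) - x"

lemma comb_right:
  assumes fin: "finite J" and apos: "\<forall>i\<in>J. 0 < a i" and qnn: "\<forall>i\<in>J. 0 \<le> q i"
    and lamB: "lam \<in> insert 0 (a ` J)"
    and mx: "\<forall>x\<in>insert 0 (a ` J). hfun J q a x \<le> hfun J q a lam"
  shows "(\<Sum>i\<in>J. if lam < a i then q i / a i else 0) \<le> 1"
proof (rule ccontr)
  let ?S = "(\<Sum>i\<in>J. if lam < a i then q i / a i else 0)"
  assume "\<not> ?S \<le> 1"
  hence S1: "?S > 1" by simp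
  define A where "A = {i\<in>J. lam < a i}"
  have lam0: "0 \<le> lam" using lamB apos by auto
  have "A \<noteq> {}"
  proof
    assume "A = {}"
    hence "?S = 0" unfolding A_def by (intro sum.neutral) auto
    with S1 show False by simp
  qed
  have finA: "finite A" using fin unfolding A_def by simp
  define l' where "l' = Min (a ` A)"
  have l'in: "l' \<in> a ` A" unfolding l'_def using finA \<open>A \<noteq> {}\<close> by (intro Min_in) auto
  have l'le: "\<And>i. i \<in> A \<Longrightarrow> l' \<le> a i" unfolding l'_def using finA by (intro Min_le) auto
  have l'gt: "lam < l'" using l'in unfolding A_def by auto
  have l'B: "l' \<in> insert 0 (a ` J)" using l'in unfolding A_def by auto
  have tm: "q i * min 1 (l' / a i) - q i * min 1 (lam / a i)
      = (l' - lam) * (if lam < a i then q i / a i else 0)" if i: "i \<in> J" for i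
  proof (cases "lam < a i")
    case True
    hence "i \<in> A" using i unfolding A_def by auto
    hence "l' \<le> a i" by (rule l'le)
    moreover have "0 < a i" using apos i by auto
    ultimately have "min 1 (l' / a i) = l' / a i" "min 1 (lam / a i) = lam / a i"
      using True by (auto simp: field_simps)
    thus ?thesis using True apos i by (simp add: field_simps diff_divide_distrib)
  next
    case False
    moreover have "0 < a i" using apos i by auto
    ultimately have "min 1 (l' / a i) = 1" "min 1 (lam / a i) = 1"
      using l'gt by (auto simp: field_simps)
    thus ?thesis using False by simp
  qed
  have "hfun J q a l' - hfun J q a lam
      = (\<Sum>i\<in>J. q i * min 1 (l' / a i) - q i * min 1 (lam / a i)) - (l' - lam)"
    unfolding hfun_def by (simp add: sum_subtractf)
  also have "\<dots> = (l' - lam) * ?S - (l' - lam)"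
    using tm by (simp add: sum_distrib_left)
  also have "\<dots> = (l' - lam) * (?S - 1)" by (simp add: algebra_simps)
  finally have "hfun J q a l' - hfun J q a lam > 0" using S1 l'gt by simp
  with mx l'B show False by auto
qed

lemma comb_left:
  assumes fin: "finite J" and apos: "\<forall>i\<in>J. 0 < a i" and qnn: "\<forall>i\<in>J. 0 \<le> q i"
    and lamB: "lam \<in> insert 0 (a ` J)" and lpos: "0 < lam"
    and mx: "\<forall>x\<in>insert 0 (a ` J). hfun J q a x \<le> hfun J q a lam"
  shows "(\<Sum>i\<in>J. if lam \<le> a i then q i / a i else 0) \<ge> 1"
proof (rule ccontr)
  let ?S = "(\<Sum>i\<in>J. if lam \<le> a i then q i / a i else 0)"
  assume "\<not> ?S \<ge> 1"
  hence S1: "?S < 1" by simp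
  define B where "B = insert 0 (a ` {i\<in>J. a i < lam})"
  have finB: "finite B" using fin unfolding B_def by simp
  define l' where "l' = Max B"
  have l'in: "l' \<in> B" unfolding l'_def using finB by (intro Max_in) (auto simp: B_def)
  have l'ge: "\<And>i. i \<in> J \<Longrightarrow> a i < lam \<Longrightarrow> a i \<le> l'" unfolding l'_def using finB
    by (intro Max_ge) (auto simp: B_def)
  have l'lt: "l' < lam" using l'in lpos unfolding B_def by auto
  have l'0: "0 \<le> l'" unfolding l'_def using finB by (intro Max_ge) (auto simp: B_def)
  have l'B: "l' \<in> insert 0 (a ` J)" using l'in unfolding B_def by auto
  have tm: "q i * min 1 (lam / a i) - q i * min 1 (l' / a i)
      = (lam - l') * (if lam \<le> a i then q i / a i else 0)" if i: "i \<in> J" for i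
  proof (cases "lam \<le> a i")
    case True
    moreover have "0 < a i" using apos i by auto
    ultimately have "min 1 (l' / a i) = l' / a i" "min 1 (lam / a i) = lam / a i"
      using l'lt by (auto simp: field_simps)
    thus ?thesis using True apos i by (simp add: field_simps diff_divide_distrib)
  next
    case False
    hence "a i \<le> l'" using l'ge i by auto
    moreover have "0 < a i" using apos i by auto
    ultimately have "min 1 (l' / a i) = 1" "min 1 (lam / a i) = 1"
      using l'lt by (auto simp: field_simps)
    thus ?thesis using False by simp
  qed
  have "hfun J q a lam - hfun J q a l'
      = (\<Sum>i\<in>J. q i * min 1 (lam / a i) - q i * min 1 (l' / a i)) - (lam - l')"
    unfolding hfun_def by (simp add: sum_subtractf)
  also have "\<dots> = (lam - l') * ?S - (lam - l')"
    using tm by (simp add: sum_distrib_left)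
  also have "\<dots> = (lam - l') * (?S - 1)" by (simp add: algebra_simps)
  finally have "hfun J q a lam - hfun J q a l' < 0" using S1 l'lt
    by (simp add: mult_pos_neg)
  with mx l'B show False by auto
qed


lemma comb_main:
  assumes fin: "finite J" and apos: "\<forall>i\<in>J. 0 < a i" and qnn: "\<forall>i\<in>J. 0 \<le> q i"
    and lamB: "lam \<in> insert 0 (a ` J)"
    and mx: "\<forall>x\<in>insert 0 (a ` J). hfun J q a x \<le> hfun J q a lam"
  shows "\<exists>\<nu>. (\<forall>i\<in>J. 0 \<le> \<nu> i) \<and> (\<Sum>i\<in>J. \<nu> i) \<le> 1 \<and>
            (\<Sum>i\<in>J. posp (q i - \<nu> i * a i)) \<le> hfun J q a lam"
proof -
  define Sg where "Sg = (\<Sum>i\<in>J. if lam < a i then q i / a i else 0)"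
  define Se where "Se = (\<Sum>i\<in>J. if lam = a i then q i / a i else 0)"
  have lam0: "0 \<le> lam" using lamB apos by auto
  have Sg1: "Sg \<le> 1" unfolding Sg_def by (rule comb_right[OF assms])
  have Sgnn: "0 \<le> Sg" unfolding Sg_def using apos qnn by (intro sum_nonneg) auto
  have Sen: "0 \<le> Se" unfolding Se_def using apos qnn by (intro sum_nonneg) auto
  have Sge: "(\<Sum>i\<in>J. if lam \<le> a i then q i / a i else 0) = Sg + Se"
    unfolding Sg_def Se_def by (subst sum.distrib[symmetric]) (intro sum.cong, auto)
  have left: "0 < lam \<Longrightarrow> Sg + Se \<ge> 1" using comb_left[OF fin apos qnn lamB _ mx] Sge by simp
  have Selam: "Se \<noteq> 0 \<Longrightarrow> 0 < lam"
  proof -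
    assume "Se \<noteq> 0"
    then obtain i where "i \<in> J" "(if lam = a i then q i / a i else 0) \<noteq> 0"
      unfolding Se_def by (rule sum.not_neutral_contains_not_neutral)
    thus "0 < lam" using apos by (auto split: if_splits)
  qed
  define th where "th = (if Se = 0 then 0 else (1 - Sg) / Se)"
  have th0: "0 \<le> th" unfolding th_def using Sg1 Sen by auto
  have th1: "th \<le> 1"
  proof (cases "Se = 0")
    case True thus ?thesis by (simp add: th_def)
  next
    case False
    hence "0 < lam" by (rule Selam)
    hence "1 \<le> Sg + Se" by (rule left)
    moreover have "0 < Se" using False Sen by simp
    ultimately show ?thesis using False by (simp add: th_def pos_divide_le_eq)
  qed
  define \<nu> where "\<nu> i = (if lam < a i then q i / a i else if lam = a i then th * (q i / a i) else 0)" for i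
  have nunn: "\<forall>i\<in>J. 0 \<le> \<nu> i" unfolding \<nu>_def using apos qnn th0 by auto
  have sumnu: "(\<Sum>i\<in>J. \<nu> i) = Sg + th * Se"
    unfolding Sg_def Se_def \<nu>_def sum_distrib_left
    by (subst sum.distrib[symmetric]) (intro sum.cong, auto)
  have sumnu1: "(\<Sum>i\<in>J. \<nu> i) \<le> 1"
    unfolding sumnu th_def using Sg1 by auto
  have tm: "q i * min 1 (lam / a i) - posp (q i - \<nu> i * a i) = lam * \<nu> i" if i: "i \<in> J" for i
  proof -
    have ai: "0 < a i" "0 \<le> q i" using apos qnn i by auto
    consider "lam < a i" | "lam = a i" | "a i < lam" by linarith
    thus ?thesis
    proof cases
      case 1
      hence "min 1 (lam / a i) = lam / a i" using ai by (auto simp: field_simps)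
      thus ?thesis using 1 ai by (simp add: \<nu>_def posp_def)
    next
      case 2
      have "\<nu> i * a i = th * q i" using 2 ai by (simp add: \<nu>_def)
      moreover have "0 \<le> (1 - th) * q i" using th1 ai by simp
      ultimately have "posp (q i - \<nu> i * a i) = (1 - th) * q i"
        by (simp add: posp_def algebra_simps)
      thus ?thesis using 2 ai by (simp add: \<nu>_def field_simps)
    next
      case 3
      hence "min 1 (lam / a i) = 1" using ai by (auto simp: field_simps)
      thus ?thesis using 3 ai by (simp add: \<nu>_def posp_def)
    qed
  qed
  have "hfun J q a lam - (\<Sum>i\<in>J. posp (q i - \<nu> i * a i))
      = (\<Sum>i\<in>J. q i * min 1 (lam / a i) - posp (q i - \<nu> i * a i)) - lam"
    unfolding hfun_def by (simp add: sum_subtractf)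
  also have "\<dots> = lam * ((\<Sum>i\<in>J. \<nu> i) - 1)"
    using tm by (simp add: sum_distrib_left algebra_simps)
  also have "\<dots> \<ge> 0"
  proof (cases "lam = 0")
    case False
    hence lp: "0 < lam" using lam0 by simp
    have "(\<Sum>i\<in>J. \<nu> i) \<ge> 1"
    proof (cases "Se = 0")
      case True thus ?thesis using left lp sumnu by simp
    next
      case False thus ?thesis using sumnu th_def by simp
    qed
    thus ?thesis using lp by simp
  qed simp
  finally show ?thesis using nunn sumnu1 by auto
qed



lemma meas_posp_comp[measurable]: "(\<lambda>x::real^'n. posp (f x)) \<in> borel_measurable borel"
  if [measurable]: "f \<in> borel_measurable borel" for f
  unfolding posp_def by measurable

lemma lower_bound:
  fixes p K w :: "real^'n" and lam :: "'n \<Rightarrow> real"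
  assumes Kp: "\<forall>i. 0 < K$i" and wp: "\<forall>i. 0 < w$i" and K0: "0 < K0" and c0: "0 \<le> c"
    and lam: "\<forall>i. 0 \<le> lam i \<and> lam i \<le> 1" and lc: "\<forall>i. lam i * posp (K0 - w$i * K$i) \<le> c"
    and feas: "call_feasible p K M" and pnn0: "\<forall>i. 0 \<le> p$i"
  shows "ennreal ((\<Sum>i\<in>UNIV. lam i * w$i * p$i) - c) \<le> basket_obj w K0 M"
proof -
  have ps: "prob_space M" and sM: "sets M = sets borel" and AEnn: "AE x in M. \<forall>i. 0 \<le> x$i"
    and pint: "\<And>i. (\<integral>\<^sup>+ x. ennreal (posp (x$i - K$i)) \<partial>M) = ennreal (p$i)"
    using feas unfolding call_feasible_def by auto
  interpret prob_space M by (rule ps)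
  have mcong: "measurable M borel = measurable borel borel"
    by (rule measurable_cong_sets[OF sM refl])
  have m1: "(\<lambda>x. ennreal (posp (x$i - K$i))) \<in> borel_measurable M" for i
    unfolding mcong by measurable
  have m2: "(\<lambda>x. ennreal (posp ((\<Sum>i\<in>UNIV. w$i * x$i) - K0))) \<in> borel_measurable M"
    unfolding mcong by measurable
  have pnn: "0 \<le> p$i" for i using pnn0 by auto
  have pw: "AE x in M. (\<Sum>i\<in>UNIV. ennreal (lam i * w$i) * ennreal (posp (x$i - K$i)))
        \<le> ennreal (posp ((\<Sum>i\<in>UNIV. w$i * x$i) - K0)) + ennreal c"
    using AEnn
  proof eventually_elim
    case (elim x)
    have eq: "w$i * posp (x$i - K$i) = posp (w$i * x$i - w$i * K$i)" for i
      using wp[rule_format, of i] by (simp add: posp_def max_mult_distrib_left right_diff_distrib)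
    have "(\<Sum>i\<in>UNIV. lam i * posp (w$i * x$i - w$i * K$i)) \<le> posp ((\<Sum>i\<in>UNIV. w$i * x$i) - K0) + c"
      using elim wp Kp lam lc K0 c0 by (intro pw2) (auto intro: less_imp_le mult_nonneg_nonneg)
    hence le: "(\<Sum>i\<in>UNIV. lam i * w$i * posp (x$i - K$i)) \<le> posp ((\<Sum>i\<in>UNIV. w$i * x$i) - K0) + c"
      by (simp add: eq mult.assoc)
    have "(\<Sum>i\<in>UNIV. ennreal (lam i * w$i) * ennreal (posp (x$i - K$i)))
        = (\<Sum>i\<in>UNIV. ennreal (lam i * w$i * posp (x$i - K$i)))"
      using lam wp by (intro sum.cong refl, subst ennreal_mult) (auto simp: posp_nonneg less_imp_le)
    also have "\<dots> = ennreal (\<Sum>i\<in>UNIV. lam i * w$i * posp (x$i - K$i))"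
      using lam wp by (intro sum_ennreal) (auto simp: posp_nonneg less_imp_le)
    also have "\<dots> \<le> ennreal (posp ((\<Sum>i\<in>UNIV. w$i * x$i) - K0) + c)"
      using le by (rule ennreal_leI)
    also have "\<dots> = ennreal (posp ((\<Sum>i\<in>UNIV. w$i * x$i) - K0)) + ennreal c"
      using c0 posp_nonneg by (simp add: ennreal_plus)
    finally show ?case .
  qed
  have "ennreal (\<Sum>i\<in>UNIV. lam i * w$i * p$i)
      = (\<Sum>i\<in>UNIV. ennreal (lam i * w$i) * ennreal (p$i))"
  proof -
    have "(\<Sum>i\<in>UNIV. ennreal (lam i * w$i) * ennreal (p$i)) = (\<Sum>i\<in>UNIV. ennreal (lam i * w$i * p$i))"
      using lam wp pnn by (intro sum.cong refl, subst ennreal_mult) (auto simp: less_imp_le)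
    also have "\<dots> = ennreal (\<Sum>i\<in>UNIV. lam i * w$i * p$i)"
      using lam wp pnn by (intro sum_ennreal) (auto simp: less_imp_le)
    finally show ?thesis by simp
  qed
  also have "\<dots> = (\<integral>\<^sup>+ x. (\<Sum>i\<in>UNIV. ennreal (lam i * w$i) * ennreal (posp (x$i - K$i))) \<partial>M)"
    using m1 by (simp add: nn_integral_sum nn_integral_cmult pint)
  also have "\<dots> \<le> (\<integral>\<^sup>+ x. ennreal (posp ((\<Sum>i\<in>UNIV. w$i * x$i) - K0)) + ennreal c \<partial>M)"
    by (rule nn_integral_mono_AE[OF pw])
  also have "\<dots> = basket_obj w K0 M + ennreal c"
    using m2 by (simp add: nn_integral_add basket_obj_def emeasure_space_1)
  finally have main: "ennreal (\<Sum>i\<in>UNIV. lam i * w$i * p$i) \<le> basket_obj w K0 M + ennreal c" .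
  show ?thesis
  proof (cases "basket_obj w K0 M" rule: ennreal_cases)
    case (real r)
    have "ennreal r + ennreal c = ennreal (r + c)" using real c0 by (simp add: ennreal_plus)
    hence "ennreal (\<Sum>i\<in>UNIV. lam i * w$i * p$i) \<le> ennreal (r + c)" using main real by simp
    hence "(\<Sum>i\<in>UNIV. lam i * w$i * p$i) \<le> r + c" using real c0 ennreal_le_iff by (metis add_nonneg_nonneg)
    thus ?thesis using real by (simp add: ennreal_leI)
  qed simp
qed



lemma sum_option_UNIV:
  fixes h :: "'n::finite option \<Rightarrow> 'b::comm_monoid_add"
  shows "(\<Sum>x\<in>UNIV. h x) = h None + (\<Sum>i\<in>UNIV. h (Some i))"
  by (simp add: UNIV_option_conv sum.reindex)

definition gdist :: "('n::finite \<Rightarrow> real) \<Rightarrow> 'n option \<Rightarrow> real" where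
  "gdist pr o' = (case o' of None \<Rightarrow> 1 - (\<Sum>i\<in>UNIV. pr i) | Some i \<Rightarrow> pr i)"

lemma gdist_ok:
  assumes "\<forall>i. 0 \<le> pr i" "(\<Sum>i\<in>UNIV. pr i) \<le> 1"
  shows "\<And>x. 0 \<le> gdist pr x" "(\<integral>\<^sup>+x. ennreal (gdist pr x) \<partial>count_space UNIV) = 1"
proof -
  show "\<And>x. 0 \<le> gdist pr x" using assms by (auto simp: gdist_def split: option.splits)
  have "(\<integral>\<^sup>+x. ennreal (gdist pr x) \<partial>count_space UNIV) = (\<Sum>x\<in>UNIV. ennreal (gdist pr x))"
    by (simp add: nn_integral_count_space_finite)
  also have "\<dots> = ennreal (\<Sum>x\<in>UNIV. gdist pr x)"
    using \<open>\<And>x. 0 \<le> gdist pr x\<close> by (intro sum_ennreal) auto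
  also have "(\<Sum>x\<in>UNIV. gdist pr x) = 1" by (simp add: sum_option_UNIV gdist_def)
  finally show "(\<integral>\<^sup>+x. ennreal (gdist pr x) \<partial>count_space UNIV) = 1" by simp
qed

definition dpmf :: "('n::finite \<Rightarrow> real) \<Rightarrow> ('n \<Rightarrow> real^'n) \<Rightarrow> (real^'n) pmf" where
  "dpmf pr s = map_pmf (\<lambda>o'. case o' of None \<Rightarrow> 0 | Some i \<Rightarrow> s i) (embed_pmf (gdist pr))"

lemma dpmf_integral:
  fixes pr :: "'n::finite \<Rightarrow> real"
  assumes pr: "\<forall>i. 0 \<le> pr i" "(\<Sum>i\<in>UNIV. pr i) \<le> 1"
    and f: "f \<in> borel_measurable borel" and fnn: "\<forall>x. 0 \<le> f x"
  shows "(\<integral>\<^sup>+x. ennreal (f x) \<partial>discrete_borel (dpmf pr s))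
     = ennreal ((1 - (\<Sum>i\<in>UNIV. pr i)) * f 0 + (\<Sum>i\<in>UNIV. pr i * f (s i)))"
proof -
  note ok = gdist_ok[OF pr]
  let ?st = "\<lambda>o'. case o' of None \<Rightarrow> 0 | Some i \<Rightarrow> s i"
  have "(\<integral>\<^sup>+x. ennreal (f x) \<partial>discrete_borel (dpmf pr s))
      = (\<integral>\<^sup>+x. ennreal (f x) \<partial>measure_pmf (dpmf pr s))"
    unfolding discrete_borel_def using f by (subst nn_integral_distr) auto
  also have "\<dots> = (\<integral>\<^sup>+o'. ennreal (f (?st o')) \<partial>measure_pmf (embed_pmf (gdist pr)))"
    by (simp add: dpmf_def)
  also have "\<dots> = (\<integral>\<^sup>+o'. ennreal (gdist pr o') * ennreal (f (?st o')) \<partial>count_space UNIV)"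
    by (simp add: nn_integral_measure_pmf pmf_embed_pmf[OF ok])
  also have "\<dots> = (\<Sum>o'\<in>UNIV. ennreal (gdist pr o') * ennreal (f (?st o')))"
    by (simp add: nn_integral_count_space_finite)
  also have "\<dots> = (\<Sum>o'\<in>UNIV. ennreal (gdist pr o' * f (?st o')))"
    using ok fnn by (intro sum.cong refl) (simp add: ennreal_mult)
  also have "\<dots> = ennreal (\<Sum>o'\<in>UNIV. gdist pr o' * f (?st o'))"
    using ok fnn by (intro sum_ennreal) auto
  also have "(\<Sum>o'\<in>UNIV. gdist pr o' * f (?st o')) = (1 - (\<Sum>i\<in>UNIV. pr i)) * f 0 + (\<Sum>i\<in>UNIV. pr i * f (s i))"
    by (simp add: sum_option_UNIV gdist_def)
  finally show ?thesis .
qed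

lemma dpmf_prob: "prob_space (discrete_borel P)"
  unfolding discrete_borel_def by (rule measure_pmf.prob_space_distr) simp

lemma dpmf_sets: "sets (discrete_borel P) = sets borel"
  unfolding discrete_borel_def by simp

lemma dpmf_AE:
  assumes "\<forall>i. \<forall>j. 0 \<le> s i $ j"
  shows "AE x in discrete_borel (dpmf pr s). \<forall>j. 0 \<le> x$j"
proof -
  have cl: "{x::real^'n. \<forall>j. 0 \<le> x$j} \<in> sets borel"
    using closed_positive_orthant by simp
  show ?thesis unfolding discrete_borel_def
    using cl assms by (subst AE_distr_iff) (auto simp: AE_measure_pmf_iff dpmf_def split: option.splits)
qed




theorem mainTheorem4:
  fixes p K w :: "real^'n" and K0 :: real
  assumes "\<forall>i. 0 \<le> p$i" and "\<forall>i. 0 < K$i" and "\<forall>i. 0 < w$i" and "0 < K0"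
  shows "p_inf p K w K0 = ennreal (dual_value p K w K0)
       \<and> dual_value p K w K0 = closed_form p K w K0
       \<and> (\<exists>P :: nat \<Rightarrow> (real^'n) pmf.
            (\<forall>k. call_feasible p K (discrete_borel (P k))) \<and>
            (\<lambda>k. basket_obj w K0 (discrete_borel (P k))) \<longlonglongrightarrow> p_inf p K w K0)"
proof -
  note pnn = assms(1) and Kp = assms(2) and wp = assms(3) and K0 = assms(4)
  define I where "I = {i. K0 \<le> K$i * w$i}"
  define J where "J = {j. K$j * w$j < K0}"
  define q where "q i = p$i * w$i" for i
  define a where "a i = K0 - K$i * w$i" for i
  have IJ: "- J = I" unfolding I_def J_def by auto
  have finJ: "finite J" by simp
  have apos: "\<forall>i\<in>J. 0 < a i" unfolding J_def a_def by auto
  have qnn: "\<forall>i. 0 \<le> q i" unfolding q_def using pnn wp by (simp add: less_imp_le)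
  define B where "B = insert 0 (a ` J)"
  have finB: "finite B" unfolding B_def by simp
  have "Max (hfun J q a ` B) \<in> hfun J q a ` B" using finB by (intro Max_in) (auto simp: B_def)
  then obtain lam where lamB: "lam \<in> B" and lamM: "hfun J q a lam = Max (hfun J q a ` B)"
    by (metis imageE)
  have mx: "\<forall>x\<in>B. hfun J q a x \<le> hfun J q a lam"
    unfolding lamM using finB by auto
  have lam0: "0 \<le> lam" using lamB apos unfolding B_def by auto
  have h0: "hfun J q a 0 = 0" by (simp add: hfun_def)
  define V where "V = (\<Sum>i\<in>I. q i) + hfun J q a lam"
  obtain \<nu>0 where nu0: "\<forall>i\<in>J. 0 \<le> \<nu>0 i" "(\<Sum>i\<in>J. \<nu>0 i) \<le> 1"
      "(\<Sum>i\<in>J. posp (q i - \<nu>0 i * a i)) \<le> hfun J q a lam"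
    using comb_main[OF finJ apos _ lamB[unfolded B_def] mx[unfolded B_def]] qnn by auto
  define L where "L = (\<Sum>i\<in>I. q i) + (\<Sum>i\<in>J. posp (q i - \<nu>0 i * a i))"
  have LV: "L \<le> V" unfolding L_def V_def using nu0 by simp

  have LB: "ennreal ((\<Sum>i\<in>I. q i) + hfun J q a x) \<le> basket_obj w K0 M"
    if x0: "0 \<le> x" and feas: "call_feasible p K M" for x M
  proof -
    define lf where "lf i = (if i \<in> J then min 1 (x / a i) else 1)" for i
    have lf: "\<forall>i. 0 \<le> lf i \<and> lf i \<le> 1" using x0 apos unfolding lf_def by auto
    have lc: "\<forall>i. lf i * posp (K0 - w$i * K$i) \<le> x"
    proof
      fix i show "lf i * posp (K0 - w$i * K$i) \<le> x"
      proof (cases "i \<in> J")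
        case True
        hence ai: "0 < a i" "posp (K0 - w$i * K$i) = a i" using apos
          by (auto simp: a_def posp_def mult.commute)
        have "min 1 (x / a i) * a i \<le> x / a i * a i" using ai by (intro mult_right_mono) auto
        thus ?thesis using True ai by (simp add: lf_def)
      next
        case False
        hence "posp (K0 - w$i * K$i) = 0" by (auto simp: J_def posp_def mult.commute)
        thus ?thesis using x0 by simp
      qed
    qed
    have "(\<Sum>i\<in>UNIV. lf i * w$i * p$i) = (\<Sum>i\<in>J. min 1 (x / a i) * q i) + (\<Sum>i\<in>I. q i)"
    proof -
      have "(\<Sum>i\<in>UNIV. lf i * w$i * p$i) = (\<Sum>i\<in>UNIV. if i \<in> J then min 1 (x / a i) * q i else q i)"
        unfolding lf_def q_def by (intro sum.cong) auto
      also have "\<dots> = (\<Sum>i\<in>J. min 1 (x / a i) * q i) + (\<Sum>i\<in>-J. q i)"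
        by (subst sum.If_cases) auto
      finally show ?thesis using IJ by simp
    qed
    hence eq: "(\<Sum>i\<in>UNIV. lf i * w$i * p$i) - x = (\<Sum>i\<in>I. q i) + hfun J q a x"
      by (simp add: hfun_def mult.commute)
    show ?thesis using lower_bound[OF Kp wp K0 x0 lf lc feas pnn] eq by simp
  qed
  have pinfV: "ennreal V \<le> p_inf p K w K0"
    unfolding p_inf_def V_def using LB lam0 by (auto intro: INF_greatest)

  have closedV: "closed_form p K w K0 = V"
  proof -
    have eqf: "posp ((\<Sum>i\<in>J. p$i * w$i * min 1 ((K0 - K$j * w$j) / (K0 - K$i * w$i))) - K0 + w$j * K$j)
        = posp (hfun J q a (a j))" for j
      by (simp add: hfun_def q_def a_def algebra_simps)
    have Mx: "(if J = {} then 0 else Max ((\<lambda>j. posp ((\<Sum>i\<in>J. p$i * w$i * min 1 ((K0 - K$j * w$j) / (K0 - K$i * w$i)))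
                       - K0 + w$j * K$j)) ` J)) = hfun J q a lam"
    proof (cases "J = {}")
      case True
      hence "lam = 0" using lamB by (simp add: B_def)
      thus ?thesis using True h0 by simp
    next
      case False
      have fimg: "finite ((\<lambda>j. posp (hfun J q a (a j))) ` J)" "(\<lambda>j. posp (hfun J q a (a j))) ` J \<noteq> {}"
        using False by auto
      have hl0: "0 \<le> hfun J q a lam" using mx h0 by (auto simp: B_def)
      have "Max ((\<lambda>j. posp (hfun J q a (a j))) ` J) = hfun J q a lam"
      proof (rule antisym)
        show "Max ((\<lambda>j. posp (hfun J q a (a j))) ` J) \<le> hfun J q a lam"
          using fimg hl0 mx by (auto simp: Max_le_iff posp_def B_def)
      next
        have "lam = 0 \<or> (\<exists>j\<in>J. lam = a j)" using lamB by (auto simp: B_def)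
        thus "hfun J q a lam \<le> Max ((\<lambda>j. posp (hfun J q a (a j))) ` J)"
        proof
          assume "lam = 0"
          moreover obtain j where "j \<in> J" using False by auto
          ultimately show ?thesis using fimg h0
            by (simp add: Max_ge_iff) (meson posp_nonneg)
        next
          assume "\<exists>j\<in>J. lam = a j"
          then obtain j where "j \<in> J" "lam = a j" by auto
          thus ?thesis using fimg
            by (simp add: Max_ge_iff posp_def) (meson max.cobounded1)
        qed
      qed
      thus ?thesis using False by (simp add: eqf)
    qed
    have "closed_form p K w K0 = (\<Sum>i\<in>I. q i) + (if J = {} then 0 else Max ((\<lambda>j. posp ((\<Sum>i\<in>J. p$i * w$i * min 1 ((K0 - K$j * w$j) / (K0 - K$i * w$i)))
                       - K0 + w$j * K$j)) ` J))"
      unfolding closed_form_def Let_def I_def J_def q_def by (rule refl)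
    thus ?thesis unfolding Mx V_def .
  qed

  define Simp where "Simp = {\<nu>::real^'n. (\<forall>i. 0 \<le> \<nu>$i) \<and> (\<Sum>i\<in>UNIV. \<nu>$i) = 1}"
  define F where "F \<nu> = (\<Sum>i\<in>UNIV. posp (p$i * w$i - \<nu>$i * posp (K0 - w$i * K$i)))" for \<nu> :: "real^'n"
  have dv: "dual_value p K w K0 = (INF \<nu>\<in>Simp. F \<nu>)" unfolding dual_value_def Simp_def F_def by (rule refl)
  have Fsplit: "F \<nu> = (\<Sum>i\<in>I. q i) + (\<Sum>i\<in>J. posp (q i - \<nu>$i * a i))" for \<nu>
  proof -
    have "F \<nu> = (\<Sum>i\<in>UNIV. if i \<in> J then posp (q i - \<nu>$i * a i) else q i)"
      unfolding F_def
    proof (intro sum.cong refl)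
      fix i
      show "posp (p$i * w$i - \<nu>$i * posp (K0 - w$i * K$i)) = (if i \<in> J then posp (q i - \<nu>$i * a i) else q i)"
      proof (cases "i \<in> J")
        case True
        hence "posp (K0 - w$i * K$i) = a i" using apos by (auto simp: a_def posp_def mult.commute)
        thus ?thesis using True by (simp add: q_def)
      next
        case False
        hence "posp (K0 - w$i * K$i) = 0" by (auto simp: J_def posp_def mult.commute)
        thus ?thesis using False qnn[rule_format, of i] by (simp add: q_def posp_def)
      qed
    qed
    also have "\<dots> = (\<Sum>i\<in>J. posp (q i - \<nu>$i * a i)) + (\<Sum>i\<in>-J. q i)"
      by (subst sum.If_cases) auto
    finally show ?thesis using IJ by simp
  qed
  have Fnn: "0 \<le> F \<nu>" for \<nu> unfolding F_def by (intro sum_nonneg) (simp add: posp_nonneg)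
  have Flow: "V \<le> F \<nu>" if nu: "\<nu> \<in> Simp" for \<nu>
  proof -
    have nn: "\<forall>i. 0 \<le> \<nu>$i" and s1: "(\<Sum>i\<in>UNIV. \<nu>$i) = 1" using nu by (auto simp: Simp_def)
    have sJ: "(\<Sum>i\<in>J. \<nu>$i) \<le> 1" using s1 nn by (metis sum_mono2 finite subset_UNIV)
    have "(\<Sum>i\<in>J. min 1 (lam / a i) * q i - lam * \<nu>$i) \<le> (\<Sum>i\<in>J. posp (q i - \<nu>$i * a i))"
    proof (intro sum_mono)
      fix i assume i: "i \<in> J"
      define m where "m = min 1 (lam / a i)"
      have ai: "0 < a i" using apos i by auto
      have m01: "0 \<le> m" "m \<le> 1" using lam0 ai by (auto simp: m_def)
      have ma: "m * a i \<le> lam" using ai lam0 unfolding m_def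
        by (metis min.cobounded2 mult_right_mono less_imp_le nonzero_divide_eq_eq order_less_irrefl divide_pos_pos le_divide_eq)
      have "m * (q i - \<nu>$i * a i) \<le> posp (q i - \<nu>$i * a i)"
        using m01 by (cases "0 \<le> q i - \<nu>$i * a i") (auto simp: posp_def mult_left_le_one_le mult_nonneg_nonpos intro: order_trans)
      moreover have "m * q i - lam * \<nu>$i \<le> m * (q i - \<nu>$i * a i)"
      proof -
        have "m * a i * \<nu>$i \<le> lam * \<nu>$i" using ma nn[rule_format, of i] by (rule mult_right_mono)
        thus ?thesis by (simp add: algebra_simps)
      qed
      ultimately show "min 1 (lam / a i) * q i - lam * \<nu>$i \<le> posp (q i - \<nu>$i * a i)"
        unfolding m_def by linarith
    qed
    moreover have "(\<Sum>i\<in>J. min 1 (lam / a i) * q i - lam * \<nu>$i)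
        = hfun J q a lam + lam * (1 - (\<Sum>i\<in>J. \<nu>$i))"
      by (simp add: hfun_def sum_subtractf sum_distrib_left algebra_simps mult.commute)
    moreover have "0 \<le> lam * (1 - (\<Sum>i\<in>J. \<nu>$i))" using lam0 sJ by simp
    ultimately show ?thesis unfolding V_def Fsplit by linarith
  qed
  define \<nu>v where "\<nu>v = (\<chi> i. (if i \<in> J then \<nu>0 i else 0) + (1 - (\<Sum>i\<in>J. \<nu>0 i)) / real CARD('n))"
  have nuvS: "\<nu>v \<in> Simp"
  proof -
    have "(\<Sum>i\<in>UNIV. \<nu>v$i) = (\<Sum>i\<in>UNIV. if i \<in> J then \<nu>0 i else 0) + real CARD('n) * ((1 - (\<Sum>i\<in>J. \<nu>0 i)) / real CARD('n))"
      by (simp add: \<nu>v_def sum.distrib)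
    also have "(\<Sum>i\<in>UNIV. if i \<in> J then \<nu>0 i else 0) = (\<Sum>i\<in>J. \<nu>0 i)"
      by (simp add: sum.If_cases)
    finally have "(\<Sum>i\<in>UNIV. \<nu>v$i) = 1" by simp
    moreover have "\<forall>i. 0 \<le> \<nu>v$i" using nu0 by (simp add: \<nu>v_def)
    ultimately show ?thesis by (simp add: Simp_def)
  qed
  have Fup: "F \<nu>v \<le> L"
  proof -
    have "(\<Sum>i\<in>J. posp (q i - \<nu>v$i * a i)) \<le> (\<Sum>i\<in>J. posp (q i - \<nu>0 i * a i))"
    proof (intro sum_mono)
      fix i assume i: "i \<in> J"
      have "\<nu>0 i \<le> \<nu>v$i" using i nu0 by (simp add: \<nu>v_def)
      hence "\<nu>0 i * a i \<le> \<nu>v$i * a i" using apos i by (intro mult_right_mono) auto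
      thus "posp (q i - \<nu>v$i * a i) \<le> posp (q i - \<nu>0 i * a i)" by (simp add: posp_def)
    qed
    thus ?thesis unfolding Fsplit L_def by simp
  qed
  have dualV: "dual_value p K w K0 = V"
  proof (rule antisym)
    have "dual_value p K w K0 \<le> F \<nu>v" unfolding dv
      using nuvS Fnn by (intro cINF_lower bdd_belowI2[where m=0]) auto
    thus "dual_value p K w K0 \<le> V" using Fup LV by simp
  next
    show "V \<le> dual_value p K w K0" unfolding dv
      using nuvS Flow by (intro cINF_greatest) auto
  qed

  have seq: "\<exists>P :: nat \<Rightarrow> (real^'n) pmf. (\<forall>k. call_feasible p K (discrete_borel (P k))) \<and>
            (\<lambda>k. basket_obj w K0 (discrete_borel (P k))) \<longlonglongrightarrow> ennreal L"
  proof -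
    define \<nu>J where "\<nu>J i = (if i \<in> J then \<nu>0 i else 0)" for i
    have nuJnn: "\<forall>i. 0 \<le> \<nu>J i" using nu0 by (simp add: \<nu>J_def)
    have nuJs: "(\<Sum>i\<in>UNIV. \<nu>J i) \<le> 1" using nu0 by (simp add: \<nu>J_def sum.If_cases)
    define ep where "ep k = inverse (real (Suc k))" for k
    define d where "d = 1 / (real CARD('n) + 1)"
    have ep: "0 < ep k" "ep k \<le> 1" for k by (auto simp: ep_def field_simps)
    have d0: "0 < d" by (simp add: d_def)
    define pr where "pr k i = (1 - ep k) * \<nu>J i + ep k * d" for k i
    have prpos: "0 < pr k i" for k i
    proof -
      have "0 \<le> (1 - ep k) * \<nu>J i" using ep nuJnn by simp
      moreover have "0 < ep k * d" using ep d0 by simp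
      ultimately show ?thesis by (simp add: pr_def)
    qed
    have prsum: "(\<Sum>i\<in>UNIV. pr k i) \<le> 1" for k
    proof -
      have "(\<Sum>i\<in>UNIV. pr k i) = (1 - ep k) * (\<Sum>i\<in>UNIV. \<nu>J i) + ep k * (real CARD('n) * d)"
        by (simp add: pr_def sum.distrib sum_distrib_left)
      also have "\<dots> \<le> (1 - ep k) * 1 + ep k * 1"
      proof (intro add_mono mult_left_mono)
        show "real CARD('n) * d \<le> 1" by (simp add: d_def field_simps)
      qed (use ep[of k] nuJs in auto)
      finally show ?thesis by simp
    qed
    define s where "s k i = (\<chi> j. if j = i then K$i + p$i / pr k i else 0)" for k i
    have snn: "\<forall>i j. 0 \<le> s k i $ j" for k
      using Kp pnn prpos by (auto simp: s_def less_imp_le)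
    define P where "P k = dpmf (pr k) (s k)" for k
    have prnn: "\<forall>i. 0 \<le> pr k i" for k using prpos by (simp add: less_imp_le)
    have scale: "t * posp y = posp (t * y)" if "0 < t" for t y :: real
      using that by (simp add: posp_def max_def mult_le_0_iff)
    have feas: "call_feasible p K (discrete_borel (P k))" for k
    proof -
      have "(\<integral>\<^sup>+ x. ennreal (posp (x$i - K$i)) \<partial>discrete_borel (P k)) = ennreal (p$i)" for i
      proof -
        have m: "(\<lambda>x::real^'n. posp (x$i - K$i)) \<in> borel_measurable borel" by measurable
        have "(\<integral>\<^sup>+ x. ennreal (posp (x$i - K$i)) \<partial>discrete_borel (P k))
          = ennreal ((1 - (\<Sum>i\<in>UNIV. pr k i)) * posp (0$i - K$i) + (\<Sum>l\<in>UNIV. pr k l * posp (s k l $ i - K$i)))"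
          unfolding P_def using prnn prsum m by (intro dpmf_integral) (auto simp: posp_nonneg)
        also have "(\<Sum>l\<in>UNIV. pr k l * posp (s k l $ i - K$i)) = (\<Sum>l\<in>UNIV. if l = i then p$i else 0)"
        proof (intro sum.cong refl)
          fix l
          show "pr k l * posp (s k l $ i - K$i) = (if l = i then p$i else 0)"
            using prpos[of k l] Kp[rule_format, of i] pnn[rule_format, of i]
            by (auto simp: s_def posp_def)
        qed
        also have "posp (0$i - K$i) = 0" using Kp by (simp add: posp_def)
        finally show ?thesis by simp
      qed
      thus ?thesis unfolding call_feasible_def P_def
        using dpmf_prob dpmf_sets dpmf_AE[OF snn] by auto
    qed
    define G where "G k = (\<Sum>l\<in>UNIV. posp (q l - pr k l * (K0 - w$l * K$l)))" for k
    have bas: "basket_obj w K0 (discrete_borel (P k)) = ennreal (G k)" for k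
    proof -
      have m: "(\<lambda>x::real^'n. posp ((\<Sum>i\<in>UNIV. w$i * x$i) - K0)) \<in> borel_measurable borel" by measurable
      have "basket_obj w K0 (discrete_borel (P k))
          = ennreal ((1 - (\<Sum>i\<in>UNIV. pr k i)) * posp ((\<Sum>i\<in>UNIV. w$i * 0$i) - K0)
              + (\<Sum>l\<in>UNIV. pr k l * posp ((\<Sum>i\<in>UNIV. w$i * s k l $ i) - K0)))"
        unfolding P_def basket_obj_def using prnn prsum m by (intro dpmf_integral) (auto simp: posp_nonneg)
      also have "posp ((\<Sum>i\<in>UNIV. w$i * 0$i) - K0) = 0" using K0 by (simp add: posp_def)
      also have "(\<Sum>l\<in>UNIV. pr k l * posp ((\<Sum>i\<in>UNIV. w$i * s k l $ i) - K0)) = G k"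
        unfolding G_def
      proof (intro sum.cong refl)
        fix l
        have "(\<Sum>i\<in>UNIV. w$i * s k l $ i) = w$l * (K$l + p$l / pr k l)"
          by (simp add: s_def if_distrib cong: if_cong)
        hence "pr k l * posp ((\<Sum>i\<in>UNIV. w$i * s k l $ i) - K0)
            = posp (pr k l * (w$l * (K$l + p$l / pr k l) - K0))"
          using scale[OF prpos[of k l]] by simp
        also have "pr k l * (w$l * (K$l + p$l / pr k l) - K0) = q l - pr k l * (K0 - w$l * K$l)"
          using prpos[of k l] by (simp add: q_def field_simps)
        finally show "pr k l * posp ((\<Sum>i\<in>UNIV. w$i * s k l $ i) - K0) = posp (q l - pr k l * (K0 - w$l * K$l))" .
      qed
      finally show ?thesis by simp
    qed
    have eplim: "ep \<longlonglongrightarrow> 0" unfolding ep_def by (rule LIMSEQ_inverse_real_of_nat)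
    have prlim: "(\<lambda>k. pr k l) \<longlonglongrightarrow> \<nu>J l" for l
    proof -
      have "(\<lambda>k. (1 - ep k) * \<nu>J l + ep k * d) \<longlonglongrightarrow> (1 - 0) * \<nu>J l + 0 * d"
        by (intro tendsto_intros eplim)
      thus ?thesis by (simp add: pr_def)
    qed
    have Glim: "G \<longlonglongrightarrow> (\<Sum>l\<in>UNIV. posp (q l - \<nu>J l * (K0 - w$l * K$l)))"
      unfolding G_def posp_def by (intro tendsto_intros prlim)
    have Leq: "(\<Sum>l\<in>UNIV. posp (q l - \<nu>J l * (K0 - w$l * K$l))) = L"
    proof -
      have "(\<Sum>l\<in>UNIV. posp (q l - \<nu>J l * (K0 - w$l * K$l)))
          = (\<Sum>l\<in>UNIV. if l \<in> J then posp (q l - \<nu>0 l * a l) else q l)"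
        using qnn by (intro sum.cong refl) (auto simp: \<nu>J_def a_def posp_def mult.commute)
      also have "\<dots> = (\<Sum>i\<in>J. posp (q i - \<nu>0 i * a i)) + (\<Sum>i\<in>-J. q i)"
        by (subst sum.If_cases) auto
      finally show ?thesis using IJ by (simp add: L_def)
    qed
    show ?thesis
    proof (intro exI conjI allI)
      show "call_feasible p K (discrete_borel (P k))" for k by (rule feas)
      show "(\<lambda>k. basket_obj w K0 (discrete_borel (P k))) \<longlonglongrightarrow> ennreal L"
        unfolding bas using Glim Leq by (intro tendsto_ennrealI) simp
    qed
  qed
  then obtain P :: "nat \<Rightarrow> (real^'n) pmf" where Pf: "\<forall>k. call_feasible p K (discrete_borel (P k))"
    and Pl: "(\<lambda>k. basket_obj w K0 (discrete_borel (P k))) \<longlonglongrightarrow> ennreal L" by blast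
  have "p_inf p K w K0 \<le> ennreal L"
  proof (rule tendsto_le[OF trivial_limit_sequentially Pl tendsto_const])
    show "\<forall>\<^sub>F k in sequentially. p_inf p K w K0 \<le> basket_obj w K0 (discrete_borel (P k))"
      using Pf unfolding p_inf_def by (intro always_eventually allI INF_lower) auto
  qed
  also have "\<dots> \<le> ennreal V" using LV by (rule ennreal_leI)
  finally have eqV: "p_inf p K w K0 = ennreal V" using pinfV by (rule antisym)
  have "ennreal L = ennreal V"
    using \<open>p_inf p K w K0 \<le> ennreal L\<close> LV eqV
    by (metis antisym ennreal_leI)
  hence Pl': "(\<lambda>k. basket_obj w K0 (discrete_borel (P k))) \<longlonglongrightarrow> p_inf p K w K0"
    using Pl eqV by simp
  show ?thesis using eqV dualV closedV Pf Pl' by auto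
qed

end
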